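(* Let $\theta>0$ and let $\langle\cdot\rangle'_{n;\theta}$ denote expectation with respect to the probability measure $M'_{n;\theta}$ on $\mathbb Y_n$. For any $F\in\mathcal A_\theta$, $\langle F\rangle'_{n;\theta}=\sum_{\lambda\in\mathbb Y_n}F(\lambda)M'_{n;\theta}(\lambda)$ is a polynomial in $n$ of degree at most $\deg F$ (degree with respect to the filtration of $\mathcal A_\theta$).
   Context: $\mathbb Y$: Young diagrams; $\mathbb Y_n$: those with $n$ boxes; $\lambda_i$ row lengths, $\ell(\lambda)$ number of nonzero rows. $\mathcal A_\theta$ is the unital $\mathbb R$-algebra of functions on $\mathbb Y$ generated by the algebraically independent functions $p^*_{m;\theta}(\lambda)=\sum_{i=1}^{\ell(\lambda)}[(\lambda_i-\theta i)^m-(-\theta i)^m]$, $m\ge1$, filtered by $\deg p^*_{m;\theta}=m$. Kerov coordinates: draw $\lambda$ in English convention (rows downward, columns rightward); the border of $\lambda$ has $2d-1$ corners $(r_k,s_k)$ ordered along the path from $+\infty$ on the horizontal axis to $+\infty$ on the vertical axis, odd $k$ being inner corners and even $k$ outer corners; $x_i=s_{2i-1}-\theta r_{2i-1}$ ($1\le i\le d$), $y_j=s_{2j}-\theta r_{2j}$ ($1\le j\le d-1$). Let $\pi^\uparrow_i(\lambda)=\prod_{j=1}^{d-1}(x_i-y_j)/\prod_{l\ne i}(x_i-x_l)$; these are positive and sum to $1$. The inner corner $(r_{2i-1},s_{2i-1})$ corresponds to the box $\square_i$ in row $r_{2i-1}+1$, column $s_{2i-1}+1$, which can be added to $\lambda$;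 the diagrams $\nu$ with $\nu\searrow\lambda$ (obtained from $\lambda$ by adding one box) are exactly $\lambda\cup\square_i$, $1\le i\le d$. Set $p^\uparrow_{n;\theta}(\lambda,\lambda\cup\square_i)=\pi^\uparrow_i(\lambda)$ for $\lambda\in\mathbb Y_n$. The measures $M'_{n;\theta}$ on $\mathbb Y_n$ are defined by $M'_{0;\theta}(\varnothing)=1$ and $M'_{n+1;\theta}(\nu)=\sum_{\lambda\in\mathbb Y_n:\,\lambda\nearrow\nu}M'_{n;\theta}(\lambda)p^\uparrow_{n;\theta}(\lambda,\nu)$. *)

theory Defs
  imports "HOL-Computational_Algebra.Polynomial"
begin

text \<open>Young diagrams are encoded as lists of row lengths lambda_1 >= lambda_2 >= ... > 0
  (English convention: row i has lambda_i boxes, rows numbered 1,2,... downward,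
  columns 1,2,... rightward).\<close>

definition young :: "nat list \<Rightarrow> bool" where
  "young la \<longleftrightarrow> sorted_wrt (\<ge>) la \<and> 0 \<notin> set la"

definition YY :: "nat \<Rightarrow> nat list set" where
  "YY n = {la. young la \<and> sum_list la = n}"

definition row :: "nat list \<Rightarrow> nat \<Rightarrow> nat" where
  "row la i = (if 1 \<le> i \<and> i \<le> length la then la ! (i - 1) else 0)"

definition pstar :: "real \<Rightarrow> nat \<Rightarrow> nat list \<Rightarrow> real" where
  "pstar th m la = (\<Sum>i=1..length la.
      (real (row la i) - th * real i) ^ m - (- th * real i) ^ m)"

definition Adeg :: "real \<Rightarrow> nat \<Rightarrow> (nat list \<Rightarrow> real) set" where
  "Adeg th d = {F. \<exists>S c. finite S \<and>
      (\<forall>ms\<in>S. (\<forall>m\<in>set ms. 1 \<le> m) \<and> sum_list ms \<le> d) \<and>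
      (\<forall>la. young la \<longrightarrow>
         F la = (\<Sum>ms\<in>S. c ms * prod_list (map (\<lambda>m. pstar th m la) ms)))}"

text \<open>Rows a in which a box can be added (the box is then at row a, column row la a + 1).
  Its inner corner is (r,s) = (a-1, row la a).\<close>
definition addable_rows :: "nat list \<Rightarrow> nat set" where
  "addable_rows la = {a. 1 \<le> a \<and> a \<le> length la + 1 \<and> (a = 1 \<or> row la a < row la (a - 1))}"

text \<open>Rows a whose last box (at row a, column row la a) is removable;
  its outer corner is (r,s) = (a, row la a).\<close>
definition removable_rows :: "nat list \<Rightarrow> nat set" where
  "removable_rows la = {a. 1 \<le> a \<and> a \<le> length la \<and> row la (a + 1) < row la a}"

definition xK :: "real \<Rightarrow> nat list \<Rightarrow> nat \<Rightarrow> real" where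
  "xK th la a = real (row la a) - th * real (a - 1)"

definition yK :: "real \<Rightarrow> nat list \<Rightarrow> nat \<Rightarrow> real" where
  "yK th la a = real (row la a) - th * real a"

definition pi_up :: "real \<Rightarrow> nat list \<Rightarrow> nat \<Rightarrow> real" where
  "pi_up th la a = (\<Prod>b\<in>removable_rows la. xK th la a - yK th la b)
                   / (\<Prod>c\<in>addable_rows la - {a}. xK th la a - xK th la c)"

definition add_box :: "nat list \<Rightarrow> nat \<Rightarrow> nat list" where
  "add_box la a = (if a = length la + 1 then la @ [1] else la[a - 1 := la ! (a - 1) + 1])"

definition up_rel :: "nat list \<Rightarrow> nat list \<Rightarrow> bool" where
  "up_rel la nu \<longleftrightarrow> nu \<in> add_box la ` addable_rows la"

definition p_up :: "real \<Rightarrow> nat list \<Rightarrow> nat list \<Rightarrow> real" where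
  "p_up th la nu = (\<Sum>a\<in>addable_rows la. if add_box la a = nu then pi_up th la a else 0)"

primrec Mp :: "real \<Rightarrow> nat \<Rightarrow> nat list \<Rightarrow> real" where
  "Mp th 0 nu = (if nu = [] then 1 else 0)"
| "Mp th (Suc n) nu = (\<Sum>la\<in>{la\<in>YY n. up_rel la nu}. Mp th n la * p_up th la nu)"

end

theory Submission
  imports Defs "HOL-Computational_Algebra.Polynomial_FPS"
begin

unbundle fps_syntax


lemma young_nth_mono:
  assumes "young la" "i < j" "j < length la"
  shows "la ! j \<le> la ! i"
  using assms unfolding young_def by (auto simp: sorted_wrt_iff_nth_less)

lemma young_pos:
  assumes "young la" "i < length la"
  shows "la ! i > 0"
  using assms unfolding young_def by (metis gr0I nth_mem)

lemma row_mono: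
  assumes "young la" "1 \<le> i" "i \<le> j"
  shows "row la j \<le> row la i"
proof (cases "j \<le> length la")
  case True
  then show ?thesis using assms young_nth_mono[of la "i - 1" "j - 1"]
    by (cases "i = j") (auto simp: row_def)
qed (auto simp: row_def)

lemma row_pos_iff:
  assumes "young la"
  shows "row la i > 0 \<longleftrightarrow> 1 \<le> i \<and> i \<le> length la"
  using assms young_pos[of la "i - 1"] by (auto simp: row_def)

lemma finite_addable: "finite (addable_rows la)"
  by (rule finite_subset[of _ "{1..length la + 1}"]) (auto simp: addable_rows_def)

lemma finite_removable: "finite (removable_rows la)"
  by (rule finite_subset[of _ "{1..length la}"]) (auto simp: removable_rows_def)

lemma addable_strict:
  assumes "young la" "a \<in> addable_rows la" "a' \<in> addable_rows la" "a < a'"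
  shows "row la a' < row la a"
proof -
  have "a' \<ge> 2" using assms by (auto simp: addable_rows_def)
  then have "row la a' < row la (a' - 1)" using assms by (auto simp: addable_rows_def)
  also have "row la (a' - 1) \<le> row la a" using assms
    by (intro row_mono) (auto simp: addable_rows_def)
  finally show ?thesis .
qed

lemma xK_inj:
  assumes "young la" "th \<ge> 0"
  shows "inj_on (xK th la) (addable_rows la)"
proof (rule inj_onI)
  fix a a' assume a: "a \<in> addable_rows la" "a' \<in> addable_rows la" "xK th la a = xK th la a'"
  show "a = a'"
  proof (rule ccontr)
    assume "a \<noteq> a'"
    then consider "a < a'" | "a' < a" by linarith
    then show False
    proof cases
      case 1
      then have "row la a' < row la a" using addable_strict assms a by blast
      moreover have "th * real (a - 1) \<le> th * real (a' - 1)" using 1 assms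
        by (intro mult_left_mono) auto
      ultimately show False using a(3) unfolding xK_def by linarith
    next
      case 2
      then have "row la a < row la a'" using addable_strict assms a by blast
      moreover have "th * real (a' - 1) \<le> th * real (a - 1)" using 2 assms
        by (intro mult_left_mono) auto
      ultimately show False using a(3) unfolding xK_def by linarith
    qed
  qed
qed

lemma corner_telescope:
  fixes f :: "real \<Rightarrow> real"
  assumes "young la"
  shows "(\<Sum>a\<in>addable_rows la. f (xK th la a)) - (\<Sum>b\<in>removable_rows la. f (yK th la b))
       = (\<Sum>i=1..length la. f (xK th la i) - f (yK th la i)) + f (xK th la (length la + 1))"
proof -
  define l where "l = length la"
  define A where "A = addable_rows la"
  define R where "R = removable_rows la"
  define NA where "NA = {1..l+1} - A"
  define NR where "NR = {1..l} - R"
  have A_sub: "A \<subseteq> {1..l+1}" by (auto simp: A_def addable_rows_def l_def)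
  have R_sub: "R \<subseteq> {1..l}" by (auto simp: R_def removable_rows_def l_def)
  have NR_img: "NA = Suc ` NR"
  proof (intro set_eqI iffI)
    fix i assume i: "i \<in> NA"
    then have i1: "1 \<le> i" "i \<le> l + 1" "i \<noteq> 1" "row la (i - 1) \<le> row la i"
      by (auto simp: NA_def A_def addable_rows_def l_def)
    have "row la i \<le> row la (i - 1)" using i1 assms by (intro row_mono) auto
    with i1 have eq: "row la i = row la (i - 1)" by linarith
    have "i \<le> l"
    proof (rule ccontr)
      assume "\<not> i \<le> l"
      then have "i = l + 1" using i1 by linarith
      then have "row la i = 0" by (auto simp: row_def l_def)
      moreover have "row la (i - 1) > 0" using assms i1 \<open>i = l + 1\<close>
        by (subst row_pos_iff) (auto simp: l_def Suc_le_eq)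
      ultimately show False using eq by linarith
    qed
    then have "i - 1 \<in> NR" using i1 eq
      by (auto simp: NR_def R_def removable_rows_def l_def)
    then show "i \<in> Suc ` NR" using i1 by (auto intro!: image_eqI[of _ _ "i - 1"])
  next
    fix i assume "i \<in> Suc ` NR"
    then obtain j where j: "j \<in> NR" "i = Suc j" by auto
    then have j1: "1 \<le> j" "j \<le> l" "row la j \<le> row la (j + 1)"
      by (auto simp: NR_def R_def removable_rows_def l_def)
    show "i \<in> NA" using j j1 by (auto simp: NA_def A_def addable_rows_def l_def)
  qed
  have xy: "xK th la (Suc j) = yK th la j" if "j \<in> NR" for j
  proof -
    from that have j1: "1 \<le> j" "j \<le> l" "row la j \<le> row la (j + 1)"
      by (auto simp: NR_def R_def removable_rows_def l_def)
    have "row la (j + 1) \<le> row la j" using assms j1 by (intro row_mono) auto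
    then have "row la (Suc j) = row la j" using j1 by simp
    then show ?thesis by (simp add: xK_def yK_def)
  qed
  have s1: "(\<Sum>i=1..l+1. f (xK th la i)) = (\<Sum>a\<in>A. f (xK th la a)) + (\<Sum>i\<in>NA. f (xK th la i))"
    unfolding NA_def using A_sub by (subst sum.subset_diff[of A]) auto
  have s2: "(\<Sum>i=1..l. f (yK th la i)) = (\<Sum>b\<in>R. f (yK th la b)) + (\<Sum>i\<in>NR. f (yK th la i))"
    unfolding NR_def using R_sub by (subst sum.subset_diff[of R]) auto
  have s3: "(\<Sum>i\<in>NA. f (xK th la i)) = (\<Sum>i\<in>NR. f (yK th la i))"
    unfolding NR_img by (subst sum.reindex) (auto simp: xy)
  have s4: "(\<Sum>i=1..l+1. f (xK th la i)) = (\<Sum>i=1..l. f (xK th la i)) + f (xK th la (l+1))"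
    by simp
  show ?thesis using s1 s2 s3 s4 unfolding A_def[symmetric] R_def[symmetric] l_def[symmetric]
    by (simp add: sum_subtractf)
qed

lemma card_addable:
  assumes "young la"
  shows "card (addable_rows la) = card (removable_rows la) + 1"
proof -
  have "real (card (addable_rows la)) - real (card (removable_rows la)) = 1"
    using corner_telescope[OF assms, of "\<lambda>_. 1" 0] by simp
  then show ?thesis by linarith
qed



lemma addable_le: "a \<in> addable_rows la \<Longrightarrow> 1 \<le> a \<and> a \<le> length la + 1"
  by (auto simp: addable_rows_def)

lemma row_add_box:
  assumes "a \<in> addable_rows la"
  shows "row (add_box la a) i = row la i + (if i = a then 1 else 0)"
proof (cases "a = length la + 1")
  case True
  then show ?thesis
    by (auto simp: add_box_def row_def nth_append)
next
  case False
  with assms have a: "1 \<le> a" "a \<le> length la" by (auto simp: addable_rows_def)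
  then show ?thesis using False
    by (auto simp: add_box_def row_def nth_list_update)
qed

lemma length_add_box:
  assumes "a \<in> addable_rows la"
  shows "length (add_box la a) = (if a = length la + 1 then length la + 1 else length la)"
  by (auto simp: add_box_def)

lemma young_iff_row:
  "young la \<longleftrightarrow> (\<forall>i. 1 \<le> i \<longrightarrow> i \<le> length la \<longrightarrow> row la i > 0) \<and>
      (\<forall>i j. 1 \<le> i \<longrightarrow> i < j \<longrightarrow> j \<le> length la \<longrightarrow> row la j \<le> row la i)"
proof
  assume y: "young la"
  show "(\<forall>i. 1 \<le> i \<longrightarrow> i \<le> length la \<longrightarrow> row la i > 0) \<and>
      (\<forall>i j. 1 \<le> i \<longrightarrow> i < j \<longrightarrow> j \<le> length la \<longrightarrow> row la j \<le> row la i)"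
    using row_pos_iff[OF y] row_mono[OF y] by auto
next
  assume h: "(\<forall>i. 1 \<le> i \<longrightarrow> i \<le> length la \<longrightarrow> row la i > 0) \<and>
      (\<forall>i j. 1 \<le> i \<longrightarrow> i < j \<longrightarrow> j \<le> length la \<longrightarrow> row la j \<le> row la i)"
  have "0 \<notin> set la"
  proof
    assume "0 \<in> set la"
    then obtain k where k: "k < length la" "la ! k = 0" by (auto simp: in_set_conv_nth)
    then show False using h[THEN conjunct1, rule_format, of "Suc k"] by (auto simp: row_def)
  qed
  moreover have "sorted_wrt (\<ge>) la"
    unfolding sorted_wrt_iff_nth_less
  proof (intro allI impI)
    fix i j assume "i < j" "j < length la"
    then show "la ! j \<le> la ! i"
      using h[THEN conjunct2, rule_format, of "Suc i" "Suc j"] by (auto simp: row_def)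
  qed
  ultimately show "young la" by (simp add: young_def)
qed

lemma young_add_box:
  assumes y: "young la" and a: "a \<in> addable_rows la"
  shows "young (add_box la a)"
  unfolding young_iff_row
proof (intro conjI allI impI)
  fix i assume "1 \<le> i" "i \<le> length (add_box la a)"
  then show "row (add_box la a) i > 0"
    using row_pos_iff[OF y, of i] a by (auto simp: row_add_box length_add_box split: if_splits)
next
  fix i j assume ij: "1 \<le> i" "i < j" "j \<le> length (add_box la a)"
  have m: "row la j \<le> row la i" using row_mono[OF y, of i j] ij by simp
  show "row (add_box la a) j \<le> row (add_box la a) i"
  proof (cases "j = a")
    case True
    then have "j \<ge> 2" using ij by auto
    have "row la a < row la (a - 1)" using a \<open>j \<ge> 2\<close> True by (auto simp: addable_rows_def)
    moreover have "row la (a - 1) \<le> row la i" using row_mono[OF y, of i "a - 1"] ij True by simp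
    ultimately show ?thesis using True ij a by (auto simp: row_add_box)
  qed (use m a in \<open>auto simp: row_add_box\<close>)
qed

lemma sum_list_add_box:
  assumes a: "a \<in> addable_rows la"
  shows "sum_list (add_box la a) = sum_list la + 1"
proof (cases "a = length la + 1")
  case True then show ?thesis by (simp add: add_box_def)
next
  case False
  with a have "a - 1 < length la" by (auto simp: addable_rows_def)
  then show ?thesis using False
    by (simp add: add_box_def sum_list_update)
qed

lemma add_box_inj: "inj_on (add_box la) (addable_rows la)"
proof (rule inj_onI)
  fix a a' assume h: "a \<in> addable_rows la" "a' \<in> addable_rows la" "add_box la a = add_box la a'"
  have e: "row (add_box la a) a = row (add_box la a') a" using h(3) by (rule arg_cong)
  have e1: "row (add_box la a) a = row la a + 1" using row_add_box[OF h(1), of a] by simp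
  have e2: "row (add_box la a') a = row la a + (if a = a' then 1 else 0)"
    using row_add_box[OF h(2), of a] by (simp add: eq_commute)
  show "a = a'"
  proof (rule ccontr)
    assume "a \<noteq> a'" with e e1 e2 show False by simp
  qed
qed

lemma length_le_sum_list: "(\<forall>x\<in>set xs. 1 \<le> x) \<Longrightarrow> length xs \<le> sum_list (xs :: nat list)"
  by (induction xs) auto

lemma finite_YY: "finite (YY n)"
proof (rule finite_subset)
  show "YY n \<subseteq> {xs. set xs \<subseteq> {0..n} \<and> length xs \<le> n}"
  proof
    fix xs assume "xs \<in> YY n"
    then have y: "young xs" "sum_list xs = n" by (auto simp: YY_def)
    then have "\<forall>x\<in>set xs. 1 \<le> x" by (auto simp: young_def Suc_le_eq intro: gr0I)
    then have "length xs \<le> n" using length_le_sum_list y by metis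
    moreover have "set xs \<subseteq> {0..n}" using member_le_sum_list y by fastforce
    ultimately show "xs \<in> {xs. set xs \<subseteq> {0..n} \<and> length xs \<le> n}" by simp
  qed
  show "finite {xs. set xs \<subseteq> {0..n} \<and> length xs \<le> n}"
    by (rule finite_lists_length_le) simp
qed

lemma up_set:
  assumes "la \<in> YY n"
  shows "{nu \<in> YY (Suc n). up_rel la nu} = add_box la ` addable_rows la"
proof (intro set_eqI iffI)
  fix nu assume "nu \<in> {nu \<in> YY (Suc n). up_rel la nu}"
  then show "nu \<in> add_box la ` addable_rows la" by (simp add: up_rel_def)
next
  fix nu assume "nu \<in> add_box la ` addable_rows la"
  then obtain a where a: "a \<in> addable_rows la" "nu = add_box la a" by blast
  have "young la" "sum_list la = n" using assms by (auto simp: YY_def)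
  then have "nu \<in> YY (Suc n)" using a young_add_box[of la a] sum_list_add_box[of a la]
    by (simp add: YY_def)
  then show "nu \<in> {nu \<in> YY (Suc n). up_rel la nu}" using a by (simp add: up_rel_def)
qed

lemma p_up_add_box:
  assumes "a \<in> addable_rows la"
  shows "p_up th la (add_box la a) = pi_up th la a"
proof -
  have "p_up th la (add_box la a) = (\<Sum>a'\<in>addable_rows la. if a' = a then pi_up th la a' else 0)"
    unfolding p_up_def
    by (rule sum.cong) (use add_box_inj assms in \<open>auto dest: inj_onD\<close>)
  also have "\<dots> = pi_up th la a" using assms finite_addable by simp
  finally show ?thesis .
qed

definition EE :: "real \<Rightarrow> nat \<Rightarrow> (nat list \<Rightarrow> real) \<Rightarrow> real" where
  "EE th n F = (\<Sum>la\<in>YY n. F la * Mp th n la)"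

definition UU :: "real \<Rightarrow> (nat list \<Rightarrow> real) \<Rightarrow> nat list \<Rightarrow> real" where
  "UU th F la = (\<Sum>a\<in>addable_rows la. pi_up th la a * F (add_box la a))"

lemma EE_step: "EE th (Suc n) F = EE th n (UU th F)"
proof -
  have "EE th (Suc n) F = (\<Sum>nu\<in>YY (Suc n). \<Sum>la\<in>YY n.
           if up_rel la nu then F nu * (Mp th n la * p_up th la nu) else 0)"
    unfolding EE_def Mp.simps
    by (simp add: sum_distrib_left sum.inter_filter[OF finite_YY] if_distrib cong: if_cong)
  also have "\<dots> = (\<Sum>la\<in>YY n. \<Sum>nu\<in>YY (Suc n).
           if up_rel la nu then F nu * (Mp th n la * p_up th la nu) else 0)"
    by (rule sum.swap)
  also have "\<dots> = (\<Sum>la\<in>YY n. Mp th n la * (\<Sum>nu\<in>{nu \<in> YY (Suc n). up_rel la nu}. F nu * p_up th la nu))"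
    by (simp add: sum.inter_filter[OF finite_YY] sum_distrib_left if_distrib mult_ac cong: if_cong)
  also have "\<dots> = (\<Sum>la\<in>YY n. Mp th n la * UU th F la)"
  proof (rule sum.cong[OF refl])
    fix la assume la: "la \<in> YY n"
    have "(\<Sum>nu\<in>{nu \<in> YY (Suc n). up_rel la nu}. F nu * p_up th la nu)
        = (\<Sum>a\<in>addable_rows la. F (add_box la a) * p_up th la (add_box la a))"
      unfolding up_set[OF la] by (rule sum.reindex[OF add_box_inj, unfolded comp_def])
    also have "\<dots> = UU th F la" unfolding UU_def
      by (rule sum.cong) (auto simp: p_up_add_box)
    finally show "Mp th n la * (\<Sum>nu\<in>{nu \<in> YY (Suc n). up_rel la nu}. F nu * p_up th la nu)
        = Mp th n la * UU th F la" by simp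
  qed
  finally show ?thesis unfolding EE_def by (simp add: mult_ac)
qed

lemma pstar_ext:
  assumes "length la \<le> N"
  shows "pstar th m la = (\<Sum>i=1..N. (real (row la i) - th * real i) ^ m - (- th * real i) ^ m)"
  unfolding pstar_def
  by (rule sum.mono_neutral_left) (use assms in \<open>auto simp: row_def\<close>)

lemma pstar_add_box:
  assumes a: "a \<in> addable_rows la"
  shows "pstar th m (add_box la a) = pstar th m la + ((xK th la a + 1 - th) ^ m - (xK th la a - th) ^ m)"
proof -
  define N where "N = length la + 1"
  define D where "D = (xK th la a + 1 - th) ^ m - (xK th la a - th) ^ m"
  define f where "f = (\<lambda>i. (real (row la i) - th * real i) ^ m - (- th * real i) ^ m)"
  have l1: "length (add_box la a) \<le> N" using a by (auto simp: N_def length_add_box)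
  have l0: "length la \<le> N" by (simp add: N_def)
  have a1: "a \<in> {1..N}" using a by (auto simp: N_def addable_rows_def)
  have "pstar th m (add_box la a) = (\<Sum>i=1..N. f i + (if i = a then D else 0))"
    unfolding pstar_ext[OF l1]
  proof (rule sum.cong[OF refl])
    fix i assume "i \<in> {1..N}"
    show "(real (row (add_box la a) i) - th * real i) ^ m - (- th * real i) ^ m =
      f i + (if i = a then D else 0)"
    proof (cases "i = a")
      case True
      have e1: "real (row (add_box la a) i) - th * real i = xK th la a + 1 - th"
        using a a1 True by (simp add: row_add_box xK_def of_nat_diff algebra_simps)
      have e2: "real (row la i) - th * real i = xK th la a - th"
        using a a1 True by (simp add: xK_def of_nat_diff algebra_simps)
      show ?thesis unfolding f_def D_def e1 e2 using True by simp
    next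
      case False
      then show ?thesis using a by (simp add: row_add_box f_def)
    qed
  qed
  also have "\<dots> = (\<Sum>i=1..N. f i) + (\<Sum>i=1..N. (if i = a then D else 0))"
    by (rule sum.distrib)
  also have "(\<Sum>i=1..N. (if i = a then D else 0)) = D" using a1 by simp
  also have "(\<Sum>i=1..N. f i) = pstar th m la" unfolding f_def by (rule pstar_ext[OF l0, symmetric])
  finally show ?thesis by (simp add: D_def)
qed



definition mon :: "real \<Rightarrow> nat list \<Rightarrow> nat list \<Rightarrow> real" where
  "mon th ms la = prod_list (map (\<lambda>m. pstar th m la) ms)"

definition evL :: "real \<Rightarrow> (real \<times> nat list) list \<Rightarrow> nat list \<Rightarrow> real" where
  "evL th L la = sum_list (map (\<lambda>(c, ms). c * mon th ms la) L)"

definition AD :: "real \<Rightarrow> nat \<Rightarrow> (nat list \<Rightarrow> real) \<Rightarrow> bool" where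
  "AD th d F \<longleftrightarrow> (\<exists>L. (\<forall>(c, ms)\<in>set L. (\<forall>m\<in>set ms. 1 \<le> m) \<and> sum_list ms \<le> d) \<and>
      (\<forall>la. young la \<longrightarrow> F la = evL th L la))"

lemma AD_cong: "AD th d F \<Longrightarrow> (\<And>la. young la \<Longrightarrow> G la = F la) \<Longrightarrow> AD th d G"
  unfolding AD_def by (elim exE conjE) (rule exI, rule conjI, assumption, simp)

lemma AD_mono: "AD th d F \<Longrightarrow> d \<le> d' \<Longrightarrow> AD th d' F"
  unfolding AD_def by (elim exE conjE) (rule exI, rule conjI[rotated], assumption, fastforce)

lemma AD_const: "AD th d (\<lambda>_. c)"
  unfolding AD_def by (rule exI[of _ "[(c, [])]"]) (simp add: evL_def mon_def)

lemma AD_pstar: "1 \<le> m \<Longrightarrow> m \<le> d \<Longrightarrow> AD th d (pstar th m)"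
  unfolding AD_def by (rule exI[of _ "[(1, [m])]"]) (simp add: evL_def mon_def)

lemma pstar_0: "pstar th 0 la = 0"
  by (simp add: pstar_def)

lemma AD_add: "AD th d F \<Longrightarrow> AD th d G \<Longrightarrow> AD th d (\<lambda>la. F la + G la)"
  unfolding AD_def
proof (elim exE conjE)
  fix L1 L2 assume h: "\<forall>(c, ms)\<in>set L1. (\<forall>m\<in>set ms. 1 \<le> m) \<and> sum_list ms \<le> d"
    "\<forall>la. young la \<longrightarrow> F la = evL th L1 la"
    "\<forall>(c, ms)\<in>set L2. (\<forall>m\<in>set ms. 1 \<le> m) \<and> sum_list ms \<le> d"
    "\<forall>la. young la \<longrightarrow> G la = evL th L2 la"
  show "\<exists>L. (\<forall>(c, ms)\<in>set L. (\<forall>m\<in>set ms. 1 \<le> m) \<and> sum_list ms \<le> d) \<and>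
        (\<forall>la. young la \<longrightarrow> F la + G la = evL th L la)"
    by (rule exI[of _ "L1 @ L2"]) (use h in \<open>auto simp: evL_def\<close>)
qed

lemma evL_mult1:
  "evL th (map (\<lambda>(c2, m2). (c1 * c2, m1 @ m2)) L2) la = c1 * mon th m1 la * evL th L2 la"
  by (induction L2) (auto simp: evL_def mon_def algebra_simps)

lemma evL_mult:
  "evL th (concat (map (\<lambda>(c1, m1). map (\<lambda>(c2, m2). (c1 * c2, m1 @ m2)) L2) L1)) la
     = evL th L1 la * evL th L2 la"
proof (induction L1)
  case Nil then show ?case by (simp add: evL_def)
next
  case (Cons p L1)
  obtain c1 m1 where p: "p = (c1, m1)" by (cases p)
  have "evL th (concat (map (\<lambda>(c1, m1). map (\<lambda>(c2, m2). (c1 * c2, m1 @ m2)) L2) (p # L1))) la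
      = evL th (map (\<lambda>(c2, m2). (c1 * c2, m1 @ m2)) L2) la +
        evL th (concat (map (\<lambda>(c1, m1). map (\<lambda>(c2, m2). (c1 * c2, m1 @ m2)) L2) L1)) la"
    by (simp add: p evL_def)
  also have "\<dots> = c1 * mon th m1 la * evL th L2 la + evL th L1 la * evL th L2 la"
    by (simp only: evL_mult1 Cons.IH)
  also have "\<dots> = evL th (p # L1) la * evL th L2 la"
    by (simp add: p evL_def algebra_simps)
  finally show ?case .
qed

lemma AD_mult: "AD th d1 F \<Longrightarrow> AD th d2 G \<Longrightarrow> d1 + d2 \<le> d \<Longrightarrow> AD th d (\<lambda>la. F la * G la)"
  unfolding AD_def
proof (elim exE conjE)
  fix L1 L2 assume h: "\<forall>(c, ms)\<in>set L1. (\<forall>m\<in>set ms. 1 \<le> m) \<and> sum_list ms \<le> d1"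
    "\<forall>la. young la \<longrightarrow> F la = evL th L1 la"
    "\<forall>(c, ms)\<in>set L2. (\<forall>m\<in>set ms. 1 \<le> m) \<and> sum_list ms \<le> d2"
    "\<forall>la. young la \<longrightarrow> G la = evL th L2 la"
    and d: "d1 + d2 \<le> d"
  show "\<exists>L. (\<forall>(c, ms)\<in>set L. (\<forall>m\<in>set ms. 1 \<le> m) \<and> sum_list ms \<le> d) \<and>
        (\<forall>la. young la \<longrightarrow> F la * G la = evL th L la)"
  proof (rule exI[of _ "concat (map (\<lambda>(c1, m1). map (\<lambda>(c2, m2). (c1 * c2, m1 @ m2)) L2) L1)"],
      intro conjI allI impI)
    show "\<forall>(c, ms)\<in>set (concat (map (\<lambda>(c1, m1). map (\<lambda>(c2, m2). (c1 * c2, m1 @ m2)) L2) L1)).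
       (\<forall>m\<in>set ms. 1 \<le> m) \<and> sum_list ms \<le> d"
    proof
      fix p assume "p \<in> set (concat (map (\<lambda>(c1, m1). map (\<lambda>(c2, m2). (c1 * c2, m1 @ m2)) L2) L1))"
      then obtain c1 m1 c2 m2 where p: "p = (c1 * c2, m1 @ m2)" "(c1, m1) \<in> set L1" "(c2, m2) \<in> set L2"
        by auto
      then have "(\<forall>m\<in>set m1. 1 \<le> m) \<and> sum_list m1 \<le> d1" "(\<forall>m\<in>set m2. 1 \<le> m) \<and> sum_list m2 \<le> d2"
        using h(1,3) by auto
      then show "case p of (c, ms) \<Rightarrow> (\<forall>m\<in>set ms. 1 \<le> m) \<and> sum_list ms \<le> d"
        using d p(1) by auto
    qed
  next
    fix la :: "nat list" assume "young la"
    then show "F la * G la = evL th (concat (map (\<lambda>(c1, m1). map (\<lambda>(c2, m2). (c1 * c2, m1 @ m2)) L2) L1)) la"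
      using h by (simp add: evL_mult)
  qed
qed

lemma AD_scale: "AD th d F \<Longrightarrow> AD th d (\<lambda>la. c * F la)"
  using AD_mult[of th 0 "\<lambda>_. c" d F d] AD_const[of th 0 c] by simp

lemma AD_zero: "AD th d (\<lambda>_. 0)"
  by (rule AD_const)

lemma AD_diff: "AD th d F \<Longrightarrow> AD th d G \<Longrightarrow> AD th d (\<lambda>la. F la - G la)"
  using AD_add[of th d F "\<lambda>la. (-1) * G la"] AD_scale[of th d G "-1"] by simp

lemma AD_sum: "finite S \<Longrightarrow> (\<And>i. i \<in> S \<Longrightarrow> AD th d (f i)) \<Longrightarrow> AD th d (\<lambda>la. \<Sum>i\<in>S. f i la)"
proof (induction S rule: finite_induct)
  case empty then show ?case by (simp add: AD_zero)
next
  case (insert x F)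
  then show ?case using AD_add[of th d "f x" "\<lambda>la. \<Sum>i\<in>F. f i la"] by simp
qed

lemma AD_pstar': "m \<le> d \<Longrightarrow> AD th d (pstar th m)"
proof (cases m)
  case 0 then show ?thesis using AD_const[of th d 0] by (simp add: pstar_0[abs_def])
next
  case (Suc k) then show "m \<le> d \<Longrightarrow> ?thesis" by (intro AD_pstar) auto
qed

lemma AD_mon: "(\<forall>m\<in>set ms. 1 \<le> m) \<Longrightarrow> AD th (sum_list ms) (mon th ms)"
proof (induction ms)
  case Nil then show ?case using AD_const[of th 0 1] by (simp add: mon_def[abs_def])
next
  case (Cons m ms)
  then show ?case using AD_mult[OF AD_pstar[of m m th] Cons.IH, of "sum_list (m # ms)"]
    by (simp add: mon_def[abs_def])
qed

lemma Adeg_AD: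
  assumes "F \<in> Adeg th d"
  shows "AD th d F"
proof -
  obtain S c where S: "finite S" "\<forall>ms\<in>S. (\<forall>m\<in>set ms. 1 \<le> m) \<and> sum_list ms \<le> d"
    "\<forall>la. young la \<longrightarrow> F la = (\<Sum>ms\<in>S. c ms * prod_list (map (\<lambda>m. pstar th m la) ms))"
    using assms unfolding Adeg_def by blast
  have "AD th d (\<lambda>la. \<Sum>ms\<in>S. c ms * mon th ms la)"
    using S(1) by (rule AD_sum) (use S(2) in \<open>auto intro!: AD_scale AD_mono[OF AD_mon]\<close>)
  then show ?thesis by (rule AD_cong) (use S(3) in \<open>simp add: mon_def\<close>)
qed



lemma addable_one: "1 \<in> addable_rows la"
  by (simp add: addable_rows_def)

lemma deg_lin: "degree [:a, b:] \<le> 1"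
  by (rule order.trans[OF degree_pCons_le]) simp

lemma degree_prod_lin: "finite S \<Longrightarrow> degree (\<Prod>c\<in>S. [:a c, b c:]) \<le> card S"
proof -
  assume fS: "finite S"
  have "degree (\<Prod>c\<in>S. [:a c, b c:]) \<le> sum (degree \<circ> (\<lambda>c. [:a c, b c:])) S"
    by (rule degree_prod_sum_le[OF fS])
  also have "\<dots> \<le> sum (\<lambda>_. 1) S" by (rule sum_mono) (simp only: o_def deg_lin)
  finally show ?thesis by simp
qed

lemma lagrange_z:
  assumes y: "young la" and th: "th \<ge> 0"
  shows "(\<Sum>a\<in>addable_rows la. smult (pi_up th la a)
            (\<Prod>c\<in>addable_rows la - {a}. [:- xK th la c, 1:]))
       = (\<Prod>b\<in>removable_rows la. [:- yK th la b, 1:])"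
    (is "?L = ?R")
proof -
  define A where "A = addable_rows la"
  define R where "R = removable_rows la"
  have fA: "finite A" and fR: "finite R" by (simp_all add: A_def R_def finite_addable finite_removable)
  have inj: "inj_on (xK th la) A" using xK_inj[OF y th] by (simp add: A_def)
  have cA: "card A = card R + 1" using card_addable[OF y] by (simp add: A_def R_def)
  have degL: "degree ?L \<le> card R"
    unfolding A_def[symmetric]
  proof (rule degree_sum_le[OF fA])
    fix a assume a: "a \<in> A"
    have "degree (\<Prod>c\<in>A - {a}. [:- xK th la c, 1:]) \<le> card (A - {a})"
      using fA by (intro degree_prod_lin) simp
    also have "\<dots> = card R" using cA a fA by simp
    finally show "degree (smult (pi_up th la a) (\<Prod>c\<in>A - {a}. [:- xK th la c, 1:])) \<le> card R"
      by (meson degree_smult_le le_trans)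
  qed
  have degR: "degree ?R \<le> card R"
    using degree_prod_lin[OF fR] by (simp add: R_def)
  show ?thesis
  proof (rule poly_eqI_degree[where A="xK th la ` A"])
    show "card (xK th la ` A) > degree ?L" "card (xK th la ` A) > degree ?R"
      using degL degR cA card_image[OF inj] by linarith+
  next
    fix z assume "z \<in> xK th la ` A"
    then obtain a0 where a0: "a0 \<in> A" "z = xK th la a0" by blast
    have "poly ?L z = (\<Sum>a\<in>A. pi_up th la a * (\<Prod>c\<in>A - {a}. z - xK th la c))"
      by (simp add: A_def poly_sum poly_prod)
    also have "\<dots> = (\<Sum>a\<in>A. if a = a0 then pi_up th la a * (\<Prod>c\<in>A - {a}. z - xK th la c) else 0)"
    proof (rule sum.cong[OF refl])
      fix a assume a: "a \<in> A"
      show "pi_up th la a * (\<Prod>c\<in>A - {a}. z - xK th la c) =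
        (if a = a0 then pi_up th la a * (\<Prod>c\<in>A - {a}. z - xK th la c) else 0)"
      proof (cases "a = a0")
        case False
        then have "(\<Prod>c\<in>A - {a}. z - xK th la c) = 0"
          using a0 fA False by (intro prod_zero) (auto intro!: bexI[of _ a0])
        then show ?thesis using False by simp
      qed simp
    qed
    also have "\<dots> = pi_up th la a0 * (\<Prod>c\<in>A - {a0}. xK th la a0 - xK th la c)"
      using a0 fA by simp
    also have "\<dots> = (\<Prod>b\<in>R. xK th la a0 - yK th la b)"
    proof -
      have "(\<Prod>c\<in>A - {a0}. xK th la a0 - xK th la c) \<noteq> 0"
        using fA inj a0 by (auto simp: prod_zero_iff dest: inj_onD)
      then show ?thesis unfolding pi_up_def A_def R_def by simp
    qed
    also have "\<dots> = poly ?R z" using a0 by (simp add: R_def poly_prod)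
    finally show "poly ?L z = poly ?R z" .
  qed
qed

lemma poly_lin_rev:
  fixes w v :: real
  assumes "w \<noteq> 0"
  shows "poly (\<Prod>c\<in>S. [:1, - f c:]) w = w ^ card S * poly (\<Prod>c\<in>S. [:- f c, 1:]) (1 / w)"
proof (cases "finite S")
  case True
  have "poly (\<Prod>c\<in>S. [:1, - f c:]) w = (\<Prod>c\<in>S. w * (1 / w - f c))"
    by (simp add: poly_prod) (rule prod.cong, use assms in \<open>auto simp: field_simps\<close>)
  also have "\<dots> = w ^ card S * (\<Prod>c\<in>S. (1 / w - f c))"
    by (simp add: prod.distrib)
  finally show ?thesis by (simp add: poly_prod)
qed simp

lemma lagrange_w:
  assumes y: "young la" and th: "th \<ge> 0"
  shows "(\<Sum>a\<in>addable_rows la. smult (pi_up th la a)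
            (\<Prod>c\<in>addable_rows la - {a}. [:1, - xK th la c:]))
       = (\<Prod>b\<in>removable_rows la. [:1, - yK th la b:])"
    (is "?L = ?R")
proof -
  define A where "A = addable_rows la"
  define R where "R = removable_rows la"
  have fA: "finite A" and fR: "finite R" by (simp_all add: A_def R_def finite_addable finite_removable)
  have cA: "card A = card R + 1" using card_addable[OF y] by (simp add: A_def R_def)
  have degL: "degree ?L \<le> card R"
    unfolding A_def[symmetric]
  proof (rule degree_sum_le[OF fA])
    fix a assume a: "a \<in> A"
    have "degree (\<Prod>c\<in>A - {a}. [:1, - xK th la c:]) \<le> card (A - {a})"
      using fA by (intro degree_prod_lin) simp
    also have "\<dots> = card R" using cA a fA by simp
    finally show "degree (smult (pi_up th la a) (\<Prod>c\<in>A - {a}. [:1, - xK th la c:])) \<le> card R"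
      by (meson degree_smult_le le_trans)
  qed
  have degR: "degree ?R \<le> card R"
    using degree_prod_lin[OF fR] by (simp add: R_def)
  have LZ: "(\<Sum>a\<in>A. smult (pi_up th la a) (\<Prod>c\<in>A - {a}. [:- xK th la c, 1:]))
       = (\<Prod>b\<in>R. [:- yK th la b, 1:])" using lagrange_z[OF y th] by (simp add: A_def R_def)
  show ?thesis
  proof (rule poly_eqI_degree[where A="real ` {1..card R + 1}"])
    show "card (real ` {1..card R + 1}) > degree ?L" "card (real ` {1..card R + 1}) > degree ?R"
      using degL degR by (simp_all add: card_image)
  next
    fix w assume "w \<in> real ` {1..card R + 1}"
    then have w: "w \<noteq> 0" by auto
    have "poly ?L w = (\<Sum>a\<in>A. pi_up th la a * (w ^ card R *
              poly (\<Prod>c\<in>A - {a}. [:- xK th la c, 1:]) (1 / w)))"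
      unfolding A_def[symmetric] poly_sum poly_smult
    proof (rule sum.cong[OF refl])
      fix a assume a: "a \<in> A"
      have "card (A - {a}) = card R" using a fA cA by simp
      then show "pi_up th la a * poly (\<Prod>c\<in>A - {a}. [:1, - xK th la c:]) w =
        pi_up th la a * (w ^ card R * poly (\<Prod>c\<in>A - {a}. [:- xK th la c, 1:]) (1 / w))"
        using poly_lin_rev[OF w, of "xK th la" "A - {a}"] by simp
    qed
    also have "\<dots> = w ^ card R * poly (\<Sum>a\<in>A. smult (pi_up th la a) (\<Prod>c\<in>A - {a}. [:- xK th la c, 1:])) (1 / w)"
      by (simp add: poly_sum sum_distrib_left mult_ac)
    also have "\<dots> = w ^ card R * poly (\<Prod>b\<in>R. [:- yK th la b, 1:]) (1 / w)"
      by (simp only: LZ)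
    also have "\<dots> = poly ?R w" using poly_lin_rev[OF w, of "yK th la" R] by (simp add: R_def)
    finally show "poly ?L w = poly ?R w" .
  qed
qed




definition lin :: "real \<Rightarrow> real fps" where "lin v = 1 - fps_const v * fps_X"
definition Gs :: "real \<Rightarrow> real fps" where "Gs v = Abs_fps (\<lambda>k. v ^ k)"
definition Ps :: "real \<Rightarrow> real fps" where "Ps v = Abs_fps (\<lambda>k. if k = 0 then 0 else v ^ k)"
definition LD :: "real fps \<Rightarrow> real fps \<Rightarrow> bool" where "LD F S \<longleftrightarrow> fps_X * fps_deriv F = F * S"

lemma lin_nth0: "lin v $ 0 = 1"
  by (simp add: lin_def)

lemma fps_of_poly_lin: "fps_of_poly [:1, - v:] = lin v"
proof (rule fps_ext)
  fix n show "fps_of_poly [:1, - v:] $ n = lin v $ n"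
    by (cases n) (auto simp: lin_def fps_of_poly_nth coeff_pCons split: nat.split)
qed

lemma lin_G: "lin v * Gs v = 1"
proof -
  have "lin v * Gs v = Gs v - fps_const v * (fps_X * Gs v)" by (simp add: lin_def algebra_simps)
  also have "\<dots> = 1"
  proof (rule fps_ext)
    fix n show "(Gs v - fps_const v * (fps_X * Gs v)) $ n = 1 $ n"
      by (cases n) (simp_all add: Gs_def)
  qed
  finally show ?thesis .
qed

lemma LD_one: "LD 1 0" by (simp add: LD_def)

lemma LD_mult: "LD F S \<Longrightarrow> LD G T \<Longrightarrow> LD (F * G) (S + T)"
  unfolding LD_def
proof -
  assume h: "fps_X * fps_deriv F = F * S" "fps_X * fps_deriv G = G * T"
  have "fps_X * fps_deriv (F * G) = F * (fps_X * fps_deriv G) + (fps_X * fps_deriv F) * G"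
    by (simp add: algebra_simps)
  also have "\<dots> = F * G * (S + T)" using h by (simp add: algebra_simps)
  finally show "fps_X * fps_deriv (F * G) = F * G * (S + T)" .
qed

lemma LD_prod: "finite S \<Longrightarrow> (\<And>i. i \<in> S \<Longrightarrow> LD (f i) (s i)) \<Longrightarrow> LD (\<Prod>i\<in>S. f i) (\<Sum>i\<in>S. s i)"
proof (induction S rule: finite_induct)
  case empty then show ?case by (simp add: LD_one)
next
  case (insert x F)
  then show ?case using LD_mult[of "f x" "s x" "\<Prod>i\<in>F. f i" "\<Sum>i\<in>F. s i"] by simp
qed

lemma LD_lin: "LD (lin v) (- Ps v)"
  unfolding LD_def
proof (rule fps_ext)
  fix n
  have d: "fps_deriv (lin v) = - fps_const v" by (simp add: lin_def)
  show "(fps_X * fps_deriv (lin v)) $ n = (lin v * - Ps v) $ n"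
  proof -
    have "lin v * - Ps v = - (Ps v - fps_const v * (fps_X * Ps v))" by (simp add: lin_def algebra_simps)
    moreover have "(fps_X * fps_deriv (lin v)) $ n = (if n = 1 then - v else 0)"
      unfolding d by (cases n) auto
    ultimately show ?thesis
      by (cases n; cases "n - 1") (auto simp: Ps_def)
  qed
qed

lemma LD_G: "LD (Gs v) (Ps v)"
proof -
  define D where "D = fps_X * fps_deriv (Gs v)"
  have "fps_deriv (lin v * Gs v) = 0" by (simp add: lin_G)
  then have "fps_X * (lin v * fps_deriv (Gs v) + fps_deriv (lin v) * Gs v) = 0" by simp
  then have "lin v * D + (fps_X * fps_deriv (lin v)) * Gs v = 0"
    by (simp add: D_def algebra_simps)
  then have "lin v * D = lin v * Ps v * Gs v"
    using LD_lin[of v] unfolding LD_def by (simp add: algebra_simps add_eq_0_iff)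
  then have "(lin v * Gs v) * D = (lin v * Gs v) * (Ps v * Gs v)" by (simp add: algebra_simps)
  then have "D = Ps v * Gs v" by (simp add: lin_G)
  then show ?thesis by (simp add: LD_def D_def mult.commute)
qed

lemma prod_nth0: "(\<Prod>i\<in>S. f i) $ 0 = (\<Prod>i\<in>S. (f i :: real fps) $ 0)"
  by (induction S rule: infinite_finite_induct) auto

definition mu :: "real \<Rightarrow> nat \<Rightarrow> nat list \<Rightarrow> real" where
  "mu th k la = (\<Sum>a\<in>addable_rows la. pi_up th la a * xK th la a ^ k)"

definition qq :: "real \<Rightarrow> nat \<Rightarrow> nat list \<Rightarrow> real" where
  "qq th j la = (\<Sum>a\<in>addable_rows la. xK th la a ^ j) - (\<Sum>b\<in>removable_rows la. yK th la b ^ j)"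

lemma fps_main:
  assumes y: "young la" and th: "th \<ge> 0"
  defines "N \<equiv> (\<Sum>a\<in>addable_rows la. fps_const (pi_up th la a) * Gs (xK th la a))"
  shows "LD N ((\<Sum>a\<in>addable_rows la. Ps (xK th la a)) + (\<Sum>b\<in>removable_rows la. - Ps (yK th la b)))"
proof -
  define A where "A = addable_rows la"
  define R where "R = removable_rows la"
  have fA: "finite A" and fR: "finite R" by (simp_all add: A_def R_def finite_addable finite_removable)
  define M where "M = (\<Prod>b\<in>R. lin (yK th la b)) * (\<Prod>a\<in>A. Gs (xK th la a))"
  define B where "B = (\<Prod>a\<in>A. lin (xK th la a))"
  have LDM: "LD M ((\<Sum>b\<in>R. - Ps (yK th la b)) + (\<Sum>a\<in>A. Ps (xK th la a)))"
    unfolding M_def by (intro LD_mult LD_prod fA fR LD_lin LD_G)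
  have BM: "B * M = (\<Prod>b\<in>R. lin (yK th la b))"
  proof -
    have "B * M = (\<Prod>b\<in>R. lin (yK th la b)) * (\<Prod>a\<in>A. lin (xK th la a) * Gs (xK th la a))"
      by (simp add: B_def M_def prod.distrib algebra_simps)
    then show ?thesis by (simp add: lin_G)
  qed
  have BN: "B * N = (\<Prod>b\<in>R. lin (yK th la b))"
  proof -
    have "B * N = (\<Sum>a\<in>A. fps_const (pi_up th la a) * (B * Gs (xK th la a)))"
      by (simp add: N_def A_def sum_distrib_left algebra_simps)
    also have "\<dots> = (\<Sum>a\<in>A. fps_const (pi_up th la a) * (\<Prod>c\<in>A - {a}. lin (xK th la c)))"
    proof (rule sum.cong[OF refl])
      fix a assume a: "a \<in> A"
      have "B = lin (xK th la a) * (\<Prod>c\<in>A - {a}. lin (xK th la c))"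
        unfolding B_def using a fA by (simp add: prod.remove)
      then have "B * Gs (xK th la a) = (lin (xK th la a) * Gs (xK th la a)) * (\<Prod>c\<in>A - {a}. lin (xK th la c))"
        by (simp add: algebra_simps)
      then show "fps_const (pi_up th la a) * (B * Gs (xK th la a)) =
        fps_const (pi_up th la a) * (\<Prod>c\<in>A - {a}. lin (xK th la c))" by (simp add: lin_G)
    qed
    also have "\<dots> = fps_of_poly (\<Sum>a\<in>addable_rows la. smult (pi_up th la a)
            (\<Prod>c\<in>addable_rows la - {a}. [:1, - xK th la c:]))"
      by (simp add: fps_of_poly_sum fps_of_poly_smult fps_of_poly_prod fps_of_poly_lin A_def)
    also have "\<dots> = fps_of_poly (\<Prod>b\<in>removable_rows la. [:1, - yK th la b:])"
      by (simp only: lagrange_w[OF y th])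
    also have "\<dots> = (\<Prod>b\<in>R. lin (yK th la b))"
      by (simp add: fps_of_poly_prod fps_of_poly_lin R_def)
    finally show ?thesis .
  qed
  have "B \<noteq> 0"
  proof
    assume "B = 0"
    then have "B $ 0 = 0" by simp
    moreover have "B $ 0 = 1" unfolding B_def prod_nth0 by (simp add: lin_nth0)
    ultimately show False by simp
  qed
  moreover have "B * M = B * N" using BM BN by simp
  ultimately have "M = N" using mult_left_cancel[of B M N] by simp
  then show ?thesis using LDM by (simp add: A_def R_def add.commute)
qed

lemma N_nth:
  "(\<Sum>a\<in>addable_rows la. fps_const (pi_up th la a) * Gs (xK th la a)) $ k = mu th k la"
  by (simp add: mu_def Gs_def fps_sum_nth)

lemma S_nth:
  "((\<Sum>a\<in>addable_rows la. Ps (xK th la a)) + (\<Sum>b\<in>removable_rows la. - Ps (yK th la b))) $ j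
     = (if j = 0 then 0 else qq th j la)"
  by (simp add: qq_def Ps_def fps_sum_nth sum_negf)

lemma mu_rec:
  assumes y: "young la" and th: "th \<ge> 0" and k: "k \<ge> 1"
  shows "real k * mu th k la = (\<Sum>i<k. mu th i la * qq th (k - i) la)"
proof -
  define N where "N = (\<Sum>a\<in>addable_rows la. fps_const (pi_up th la a) * Gs (xK th la a))"
  define S where "S = (\<Sum>a\<in>addable_rows la. Ps (xK th la a)) + (\<Sum>b\<in>removable_rows la. - Ps (yK th la b))"
  have "fps_X * fps_deriv N = N * S" using fps_main[OF y th] unfolding LD_def N_def S_def .
  then have e: "(fps_X * fps_deriv N) $ k = (N * S) $ k" by simp
  have l: "(fps_X * fps_deriv N) $ k = real k * mu th k la"
    using k by (simp add: N_def[symmetric] N_nth[of th la, folded N_def])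
  have "(N * S) $ k = (\<Sum>i=0..k. mu th i la * (if k - i = 0 then 0 else qq th (k - i) la))"
    unfolding fps_mult_nth by (simp add: N_nth[of th la, folded N_def] S_nth[of th la, folded S_def])
  also have "\<dots> = (\<Sum>i<k. mu th i la * qq th (k - i) la)"
  proof -
    have "{0..k} = insert k {..<k}" by auto
    then show ?thesis by (simp add: sum.insert)
  qed
  finally show ?thesis using e l by simp
qed

lemma mu_0:
  assumes y: "young la" and th: "th \<ge> 0"
  shows "mu th 0 la = 1"
proof -
  define A where "A = addable_rows la"
  define R where "R = removable_rows la"
  have fA: "finite A" and fR: "finite R" by (simp_all add: A_def R_def finite_addable finite_removable)
  have "poly (\<Sum>a\<in>A. smult (pi_up th la a) (\<Prod>c\<in>A - {a}. [:1, - xK th la c:])) 0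
      = poly (\<Prod>b\<in>R. [:1, - yK th la b:]) 0"
    using lagrange_w[OF y th] by (simp add: A_def R_def)
  then show ?thesis by (simp add: poly_sum poly_prod mu_def A_def)
qed



lemma binom_diff:
  fixes u t :: real
  shows "(u + t) ^ j - u ^ j = (\<Sum>i<j. real (j choose i) * t ^ (j - i) * u ^ i)"
proof -
  have "(u + t) ^ j = (\<Sum>i\<le>j. real (j choose i) * u ^ i * t ^ (j - i))"
    by (rule binomial_ring)
  also have "\<dots> = (\<Sum>i<j. real (j choose i) * u ^ i * t ^ (j - i)) + u ^ j"
    by (simp add: lessThan_Suc_atMost[symmetric])
  finally show ?thesis by (simp add: mult_ac)
qed

lemma telescope1: "(\<Sum>r=1..(n::nat). g (r - 1) - g r) = g 0 - (g n :: real)"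
  by (induction n) (auto simp: sum.cl_ivl_Suc)

lemma qq_formula:
  assumes y: "young la"
  shows "qq th j la = (\<Sum>i<j. real (j choose i) * th ^ (j - i) * pstar th i la) + 0 ^ j"
proof -
  define l where "l = length la"
  define u where "u = (\<lambda>r. real (row la r) - th * real r)"
  define v where "v = (\<lambda>r::nat. - th * real r)"
  have xu: "xK th la r = u r + th" if "1 \<le> r" for r
    using that by (simp add: xK_def u_def of_nat_diff algebra_simps)
  have yu: "yK th la r = u r" for r by (simp add: yK_def u_def)
  have xl: "xK th la (l + 1) = - th * real l" by (simp add: xK_def row_def l_def)
  have "qq th j la = (\<Sum>r=1..l. (u r + th) ^ j - u r ^ j) + (- th * real l) ^ j"
    unfolding qq_def corner_telescope[OF y, of "\<lambda>z. z ^ j" th] l_def[symmetric] xl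
    by (simp add: xu yu)
  also have "(\<Sum>r=1..l. (u r + th) ^ j - u r ^ j)
      = (\<Sum>r=1..l. ((u r + th) ^ j - u r ^ j) - ((v r + th) ^ j - v r ^ j)) + (\<Sum>r=1..l. (v r + th) ^ j - v r ^ j)"
    by (simp add: sum_subtractf)
  also have "(\<Sum>r=1..l. (v r + th) ^ j - v r ^ j) = 0 ^ j - (- th * real l) ^ j"
  proof -
    define g where "g = (\<lambda>r::nat. (- th * real r) ^ j)"
    have "(\<Sum>r=1..l. (v r + th) ^ j - v r ^ j) = (\<Sum>r=1..l. g (r - 1) - g r)"
      by (rule sum.cong) (auto simp: v_def g_def of_nat_diff algebra_simps)
    also have "\<dots> = g 0 - g l" by (rule telescope1)
    finally show ?thesis by (simp add: g_def)
  qed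
  also have "(\<Sum>r=1..l. ((u r + th) ^ j - u r ^ j) - ((v r + th) ^ j - v r ^ j))
      = (\<Sum>i<j. real (j choose i) * th ^ (j - i) * pstar th i la)"
  proof -
    have "(\<Sum>r=1..l. ((u r + th) ^ j - u r ^ j) - ((v r + th) ^ j - v r ^ j))
        = (\<Sum>r=1..l. \<Sum>i<j. real (j choose i) * th ^ (j - i) * (u r ^ i - v r ^ i))"
      by (rule sum.cong[OF refl]) (simp only: binom_diff sum_subtractf[symmetric] right_diff_distrib)
    also have "\<dots> = (\<Sum>i<j. real (j choose i) * th ^ (j - i) * (\<Sum>r=1..l. u r ^ i - v r ^ i))"
      by (subst sum.swap) (simp add: sum_distrib_left)
    also have "\<dots> = (\<Sum>i<j. real (j choose i) * th ^ (j - i) * pstar th i la)"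
      by (simp add: pstar_def u_def v_def l_def)
    finally show ?thesis .
  qed
  finally show ?thesis by simp
qed

lemma AD_qq: "AD th j (qq th j)"
proof -
  have "AD th j (\<lambda>la. (\<Sum>i<j. real (j choose i) * th ^ (j - i) * pstar th i la) + 0 ^ j)"
    by (intro AD_add AD_sum AD_scale AD_pstar' AD_const) auto
  then show ?thesis by (rule AD_cong) (simp add: qq_formula)
qed

lemma AD_mu:
  assumes th: "th \<ge> 0"
  shows "AD th k (mu th k)"
proof (induction k rule: less_induct)
  case (less k)
  show ?case
  proof (cases "k = 0")
    case True
    then show ?thesis using AD_const[of th 0 1] by (rule_tac AD_cong) (auto simp: mu_0[OF _ th])
  next
    case False
    have "AD th k (\<lambda>la. (1 / real k) * (\<Sum>i<k. mu th i la * qq th (k - i) la))"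
      by (intro AD_scale AD_sum AD_mult[OF less AD_qq]) auto
    then show ?thesis
    proof (rule AD_cong)
      fix la :: "nat list" assume y: "young la"
      show "mu th k la = 1 / real k * (\<Sum>i<k. mu th i la * qq th (k - i) la)"
        using mu_rec[OF y th, of k] False by (simp add: field_simps)
    qed
  qed
qed

definition Lfun :: "real \<Rightarrow> real poly \<Rightarrow> nat list \<Rightarrow> real" where
  "Lfun th G la = (\<Sum>a\<in>addable_rows la. pi_up th la a * poly G (xK th la a))"

lemma AD_Lfun:
  assumes th: "th \<ge> 0"
  shows "AD th (degree G) (Lfun th G)"
proof -
  have "AD th (degree G) (\<lambda>la. \<Sum>i\<le>degree G. coeff G i * mu th i la)"
    by (intro AD_sum AD_scale AD_mono[OF AD_mu[OF th]]) auto
  then show ?thesis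
  proof (rule AD_cong)
    fix la :: "nat list"
    show "Lfun th G la = (\<Sum>i\<le>degree G. coeff G i * mu th i la)"
      unfolding Lfun_def mu_def poly_altdef
      by (simp add: sum_distrib_left sum_distrib_right mult_ac) (rule sum.swap)
  qed
qed

definition gm :: "real \<Rightarrow> nat \<Rightarrow> real poly" where
  "gm th m = [:1 - th, 1:] ^ m - [:- th, 1:] ^ m"

lemma poly_gm: "poly (gm th m) x = (x + 1 - th) ^ m - (x - th) ^ m"
  by (simp add: gm_def poly_power algebra_simps)

lemma deg_gm: "degree (gm th m) \<le> m - 1"
proof (cases "gm th m = 0")
  case False
  have d: "degree (gm th m) \<le> m" unfolding gm_def
    using degree_diff_le[of "[:1 - th, 1:] ^ m" m "[:- th, 1:] ^ m"]
    by (simp add: degree_linear_power)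
  have c: "coeff (gm th m) m = 0" by (simp add: gm_def coeff_linear_power)
  have "degree (gm th m) \<noteq> m"
  proof
    assume "degree (gm th m) = m"
    then have "lead_coeff (gm th m) = 0" using c by simp
    then show False using False by simp
  qed
  then show ?thesis using d by linarith
qed simp

definition W :: "real \<Rightarrow> real poly \<Rightarrow> nat list \<Rightarrow> nat list \<Rightarrow> real" where
  "W th G ms la = (\<Sum>a\<in>addable_rows la. pi_up th la a * poly G (xK th la a) * mon th ms (add_box la a))"

lemma W_Nil: "W th G [] la = Lfun th G la"
  by (simp add: W_def Lfun_def mon_def)

lemma W_Cons: "W th G (m # ms) la = pstar th m la * W th G ms la + W th (G * gm th m) ms la"
proof -
  have "W th G (m # ms) la = (\<Sum>a\<in>addable_rows la. pstar th m la * (pi_up th la a * poly G (xK th la a) * mon th ms (add_box la a))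
       + pi_up th la a * poly (G * gm th m) (xK th la a) * mon th ms (add_box la a))"
    unfolding W_def
  proof (rule sum.cong[OF refl])
    fix a assume a: "a \<in> addable_rows la"
    show "pi_up th la a * poly G (xK th la a) * mon th (m # ms) (add_box la a) =
      pstar th m la * (pi_up th la a * poly G (xK th la a) * mon th ms (add_box la a)) +
      pi_up th la a * poly (G * gm th m) (xK th la a) * mon th ms (add_box la a)"
      by (simp add: mon_def pstar_add_box[OF a] poly_gm algebra_simps)
  qed
  then show ?thesis by (simp add: W_def sum.distrib sum_distrib_left)
qed

lemma AD_W:
  assumes th: "th \<ge> 0"
  shows "\<forall>m\<in>set ms. 1 \<le> m \<Longrightarrow> AD th (degree G + sum_list ms) (W th G ms)"
proof (induction ms arbitrary: G)
  case Nil then show ?case using AD_Lfun[OF th, of G] by (simp add: W_Nil[abs_def])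
next
  case (Cons m ms)
  have m: "1 \<le> m" and ms: "\<forall>m\<in>set ms. 1 \<le> m" using Cons.prems by auto
  have d: "degree (G * gm th m) \<le> degree G + (m - 1)"
    using degree_mult_le[of G "gm th m"] deg_gm[of th m] by linarith
  have "AD th (degree G + sum_list (m # ms)) (\<lambda>la. pstar th m la * W th G ms la + W th (G * gm th m) ms la)"
    by (intro AD_add AD_mult[OF AD_pstar[OF m order.refl] Cons.IH[OF ms]]
        AD_mono[OF Cons.IH[OF ms]]) (use d in auto)
  then show ?case by (rule AD_cong) (simp add: W_Cons)
qed

lemma AD_W_diff:
  assumes th: "th \<ge> 0"
  shows "\<forall>m\<in>set ms. 1 \<le> m \<Longrightarrow>
    AD th (degree G + sum_list ms - 1) (\<lambda>la. W th G ms la - Lfun th G la * mon th ms la)"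
proof (induction ms arbitrary: G)
  case Nil then show ?case using AD_zero[of th "degree G - 1"] by (rule_tac AD_cong) (auto simp: W_Nil mon_def)
next
  case (Cons m ms)
  have m: "1 \<le> m" and ms: "\<forall>m\<in>set ms. 1 \<le> m" using Cons.prems by auto
  have d: "degree (G * gm th m) \<le> degree G + (m - 1)"
    using degree_mult_le[of G "gm th m"] deg_gm[of th m] by linarith
  have A2: "AD th (degree G + sum_list (m # ms) - 1) (W th (G * gm th m) ms)"
    by (rule AD_mono[OF AD_W[OF th ms]]) (use d m in auto)
  have A1: "AD th (degree G + sum_list (m # ms) - 1)
       (\<lambda>la. pstar th m la * (W th G ms la - Lfun th G la * mon th ms la))"
  proof (cases "ms = []")
    case True
    show ?thesis using AD_zero by (rule AD_cong) (simp add: True W_Nil mon_def)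
  next
    case False
    then have "sum_list ms \<ge> 1" using ms by (cases ms) auto
    then show ?thesis
      by (intro AD_mult[OF AD_pstar[OF m order.refl] Cons.IH[OF ms]]) auto
  qed
  have "AD th (degree G + sum_list (m # ms) - 1)
     (\<lambda>la. pstar th m la * (W th G ms la - Lfun th G la * mon th ms la) + W th (G * gm th m) ms la)"
    by (rule AD_add[OF A1 A2])
  then show ?case by (rule AD_cong) (simp add: W_Cons mon_def algebra_simps)
qed

lemma Lfun_1: "young la \<Longrightarrow> th \<ge> 0 \<Longrightarrow> Lfun th 1 la = 1"
  using mu_0[of la th] by (simp add: Lfun_def mu_def)

lemma UU_evL:
  assumes y: "young la" and th: "th \<ge> 0"
  shows "(\<Sum>a\<in>addable_rows la. pi_up th la a * evL th L (add_box la a)) - evL th L la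
     = (\<Sum>(c, ms)\<leftarrow>L. c * (W th 1 ms la - Lfun th 1 la * mon th ms la))"
proof (induction L)
  case Nil then show ?case by (simp add: evL_def)
next
  case (Cons p L)
  obtain c ms where p: "p = (c, ms)" by (cases p)
  have "(\<Sum>a\<in>addable_rows la. pi_up th la a * evL th (p # L) (add_box la a)) - evL th (p # L) la
      = c * (W th 1 ms la - mon th ms la) +
        ((\<Sum>a\<in>addable_rows la. pi_up th la a * evL th L (add_box la a)) - evL th L la)"
    by (simp add: p evL_def W_def algebra_simps sum.distrib sum_distrib_left)
  then show ?case using Cons Lfun_1[OF y th] by (simp add: p)
qed

lemma AD_sum_list: "(\<And>p. p \<in> set L \<Longrightarrow> AD th d (f p)) \<Longrightarrow> AD th d (\<lambda>la. \<Sum>p\<leftarrow>L. f p la)"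
proof (induction L)
  case Nil then show ?case by (simp add: AD_zero)
next
  case (Cons a L)
  then show ?case using AD_add[of th d "f a" "\<lambda>la. \<Sum>p\<leftarrow>L. f p la"] by simp
qed

lemma AD_UU:
  assumes th: "th \<ge> 0" and F: "AD th d F"
  shows "AD th (d - 1) (\<lambda>la. UU th F la - F la)"
proof -
  obtain L where L: "\<forall>(c, ms)\<in>set L. (\<forall>m\<in>set ms. 1 \<le> m) \<and> sum_list ms \<le> d"
      "\<forall>la. young la \<longrightarrow> F la = evL th L la"
    using F unfolding AD_def by blast
  have "AD th (d - 1) (\<lambda>la. \<Sum>p\<leftarrow>L. (case p of (c, ms) \<Rightarrow> c * (W th 1 ms la - Lfun th 1 la * mon th ms la)))"
  proof (rule AD_sum_list)
    fix p assume p: "p \<in> set L"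
    obtain c ms where pc: "p = (c, ms)" by (cases p)
    have h: "\<forall>m\<in>set ms. 1 \<le> m" "sum_list ms \<le> d" using L(1) p pc by auto
    have "AD th (d - 1) (\<lambda>la. c * (W th 1 ms la - Lfun th 1 la * mon th ms la))"
      by (rule AD_scale, rule AD_mono[OF AD_W_diff[OF th h(1), of 1]]) (use h(2) in simp)
    then show "AD th (d - 1) (\<lambda>la. case p of (c, ms) \<Rightarrow> c * (W th 1 ms la - Lfun th 1 la * mon th ms la))"
      by (simp add: pc)
  qed
  then show ?thesis
  proof (rule AD_cong)
    fix la :: "nat list" assume y: "young la"
    have "UU th F la = (\<Sum>a\<in>addable_rows la. pi_up th la a * evL th L (add_box la a))"
      unfolding UU_def using L(2) young_add_box[OF y] by simp
    then show "UU th F la - F la =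
         (\<Sum>p\<leftarrow>L. case p of (c, ms) \<Rightarrow> c * (W th 1 ms la - Lfun th 1 la * mon th ms la))"
      using UU_evL[OF y th, of L] L(2) y by simp
  qed
qed



definition PF :: "nat \<Rightarrow> (nat \<Rightarrow> real) \<Rightarrow> bool" where
  "PF e f \<longleftrightarrow> (\<exists>P :: real poly. degree P \<le> e \<and> (\<forall>n. f n = poly P (real n)))"

lemma PF_const: "PF e (\<lambda>_. c)"
  unfolding PF_def by (rule exI[of _ "[:c:]"]) simp

lemma PF_add: "PF e f \<Longrightarrow> PF e g \<Longrightarrow> PF e (\<lambda>n. f n + g n)"
  unfolding PF_def
proof (elim exE conjE)
  fix P Q assume "degree P \<le> e" "\<forall>n. f n = poly P (real n)" "degree Q \<le> e" "\<forall>n. g n = poly Q (real n)"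
  then show "\<exists>P. degree P \<le> e \<and> (\<forall>n. f n + g n = poly P (real n))"
    by (intro exI[of _ "P + Q"]) (auto intro: order.trans[OF degree_add_le_max])
qed

lemma PF_scale: "PF e f \<Longrightarrow> PF e (\<lambda>n. c * f n)"
  unfolding PF_def
proof (elim exE conjE)
  fix P assume "degree P \<le> e" "\<forall>n. f n = poly P (real n)"
  then show "\<exists>P. degree P \<le> e \<and> (\<forall>n. c * f n = poly P (real n))"
    by (intro exI[of _ "smult c P"]) (auto intro: order.trans[OF degree_smult_le])
qed

lemma PF_mono: "PF e f \<Longrightarrow> e \<le> e' \<Longrightarrow> PF e' f"
  unfolding PF_def by (meson order.trans)

lemma PF_sum: "finite S \<Longrightarrow> (\<And>i. i \<in> S \<Longrightarrow> PF e (f i)) \<Longrightarrow> PF e (\<lambda>n. \<Sum>i\<in>S. f i n)"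
proof (induction S rule: finite_induct)
  case empty then show ?case using PF_const[of e 0] by simp
next
  case (insert x F)
  then show ?case using PF_add[of e "f x" "\<lambda>n. \<Sum>i\<in>F. f i n"] by simp
qed

lemma PF_pow: "PF k (\<lambda>n. real n ^ k)"
  unfolding PF_def by (rule exI[of _ "[:0, 1:] ^ k"]) (simp add: degree_linear_power poly_power)

lemma PF_cong: "PF e f \<Longrightarrow> (\<And>n. g n = f n) \<Longrightarrow> PF e g"
  unfolding PF_def by simp

lemma faulhaber: "PF (k + 1) (\<lambda>n. \<Sum>i<n. real i ^ k)"
proof (induction k rule: less_induct)
  case (less k)
  define S where "S = (\<lambda>j n. \<Sum>i<n. real i ^ j)"
  have key: "real n ^ (k + 1) = real (k + 1) * S k n + (\<Sum>j<k. real (k + 1 choose j) * S j n)" for n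
  proof -
    have "real n ^ (k + 1) = (\<Sum>i<n. (real i + 1) ^ (k + 1) - real i ^ (k + 1))"
      using sum_lessThan_telescope[of "\<lambda>i. real i ^ (k + 1)" n] by (simp add: add.commute)
    also have "\<dots> = (\<Sum>i<n. \<Sum>j<k + 1. real (k + 1 choose j) * real i ^ j)"
      by (rule sum.cong[OF refl], subst binom_diff) simp
    also have "\<dots> = (\<Sum>j<k + 1. real (k + 1 choose j) * S j n)"
      by (subst sum.swap) (simp add: S_def sum_distrib_left)
    also have "\<dots> = real (k + 1) * S k n + (\<Sum>j<k. real (k + 1 choose j) * S j n)"
      by simp
    finally show ?thesis .
  qed
  have "PF (k + 1) (\<lambda>n. (1 / real (k + 1)) * (real n ^ (k + 1) + (- 1) * (\<Sum>j<k. real (k + 1 choose j) * S j n)))"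
  proof -
    have IH: "PF (k + 1) (S j)" if "j < k" for j
      using PF_mono[OF less[OF that], of "k + 1"] that by (simp add: S_def)
    show ?thesis by (intro PF_scale PF_add PF_pow PF_sum IH) auto
  qed
  then show ?case
  proof (rule PF_cong)
    fix n show "(\<Sum>i<n. real i ^ k) =
      1 / real (k + 1) * (real n ^ (k + 1) + - 1 * (\<Sum>j<k. real (k + 1 choose j) * S j n))"
      using key[of n] by (simp add: S_def field_simps)
  qed
qed

lemma PF_antidiff:
  assumes "PF e f"
  shows "PF (e + 1) (\<lambda>n. \<Sum>i<n. f i)"
proof -
  obtain P where P: "degree P \<le> e" "\<forall>n. f n = poly P (real n)" using assms unfolding PF_def by blast
  have "PF (e + 1) (\<lambda>n. \<Sum>j\<le>degree P. coeff P j * (\<Sum>i<n. real i ^ j))"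
    by (intro PF_sum PF_scale PF_mono[OF faulhaber]) (use P in auto)
  then show ?thesis
  proof (rule PF_cong)
    fix n show "(\<Sum>i<n. f i) = (\<Sum>j\<le>degree P. coeff P j * (\<Sum>i<n. real i ^ j))"
      using P(2) by (simp add: poly_altdef sum_distrib_left) (rule sum.swap)
  qed
qed

lemma EE_cong: "(\<And>la. young la \<Longrightarrow> F la = G la) \<Longrightarrow> EE th n F = EE th n G"
  unfolding EE_def by (rule sum.cong) (auto simp: YY_def)

lemma EE_add: "EE th n (\<lambda>la. F la + G la) = EE th n F + EE th n G"
  unfolding EE_def by (simp add: sum.distrib algebra_simps)

lemma EE_scale: "EE th n (\<lambda>la. c * F la) = c * EE th n F"
  unfolding EE_def by (simp add: sum_distrib_left mult_ac)

lemma YY_0: "YY 0 = {[]}"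
proof (intro set_eqI iffI)
  fix xs assume "xs \<in> YY 0"
  then have "0 \<notin> set xs" "\<forall>x\<in>set xs. x = 0" by (auto simp: YY_def young_def)
  then show "xs \<in> {[]}" by (cases xs) auto
qed (auto simp: YY_def young_def)

lemma EE_one: "th \<ge> 0 \<Longrightarrow> EE th n (\<lambda>_. 1) = 1"
proof (induction n)
  case 0 then show ?case by (simp add: EE_def YY_0)
next
  case (Suc n)
  have "EE th (Suc n) (\<lambda>_. 1) = EE th n (UU th (\<lambda>_. 1))" by (rule EE_step)
  also have "\<dots> = EE th n (\<lambda>_. 1)"
    by (rule EE_cong) (use Suc.prems in \<open>simp add: UU_def mu_0[unfolded mu_def, simplified]\<close>)
  finally show ?case using Suc by simp
qed

lemma evL_0:
  "(\<forall>(c, ms)\<in>set L. (\<forall>m\<in>set ms. 1 \<le> m) \<and> sum_list ms \<le> 0) \<Longrightarrow> evL th L la = sum_list (map fst L)"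
proof (induction L)
  case Nil then show ?case by (simp add: evL_def)
next
  case (Cons p L)
  obtain c ms where p: "p = (c, ms)" by (cases p)
  have "ms = []" using Cons.prems p by (cases ms) auto
  then show ?case using Cons by (simp add: p evL_def mon_def)
qed

lemma main:
  assumes th: "th > 0"
  shows "AD th d F \<Longrightarrow> PF d (\<lambda>n. EE th n F)"
proof (induction d arbitrary: F)
  case 0
  obtain L where L: "\<forall>(c, ms)\<in>set L. (\<forall>m\<in>set ms. 1 \<le> m) \<and> sum_list ms \<le> 0"
      "\<forall>la. young la \<longrightarrow> F la = evL th L la"
    using 0 unfolding AD_def by blast
  have c: "EE th n F = sum_list (map fst L)" for n
  proof -
    have "EE th n F = EE th n (\<lambda>la. sum_list (map fst L) * 1)"
      by (rule EE_cong) (simp add: L(2) evL_0[OF L(1)])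
    also have "\<dots> = sum_list (map fst L) * EE th n (\<lambda>_. 1)" by (rule EE_scale)
    also have "\<dots> = sum_list (map fst L)" by (simp only: EE_one[OF less_imp_le[OF th], of n] mult_1_right)
    finally show ?thesis .
  qed
  show ?case using PF_cong[OF PF_const[of 0 "sum_list (map fst L)"], of "\<lambda>n. EE th n F"] c by blast
next
  case (Suc d)
  define D where "D = (\<lambda>la. UU th F la - F la)"
  have AD: "AD th d D" using AD_UU[of th "Suc d" F] th Suc.prems by (simp add: D_def)
  have PD: "PF d (\<lambda>n. EE th n D)" by (rule Suc.IH[OF AD])
  have step: "EE th (Suc n) F = EE th n F + EE th n D" for n
  proof -
    have "EE th (Suc n) F = EE th n (\<lambda>la. F la + D la)"
      unfolding EE_step by (rule EE_cong) (simp add: D_def)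
    then show ?thesis by (simp add: EE_add)
  qed
  have eq: "EE th n F = EE th 0 F + (\<Sum>i<n. EE th i D)" for n
    by (induction n) (simp_all add: step)
  have "PF (Suc d) (\<lambda>n. EE th 0 F + (\<Sum>i<n. EE th i D))"
    by (intro PF_add PF_const) (use PF_antidiff[OF PD] in simp)
  then show ?case by (rule PF_cong) (rule eq)
qed

theorem theorem6:
  fixes th :: real and d :: nat and F :: "nat list \<Rightarrow> real"
  assumes "th > 0" and "F \<in> Adeg th d"
  shows "\<exists>P :: real poly. degree P \<le> d \<and>
           (\<forall>n. (\<Sum>la\<in>YY n. F la * Mp th n la) = poly P (real n))"
  using main[OF assms(1) Adeg_AD[OF assms(2)]] unfolding PF_def EE_def .



end
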